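(* Let $P$ be a set of $n\geq 5$ points in general position in the plane and let $\mathcal{P}$ be the set of all closed segments with both endpoints in $P$. If $\mathcal{P}$ contains $5$ pairwise disjoint segments each of which is clean in $\mathcal{P}$, then $\mu(D(P))\geq\binom{n}{2}-5$.
   Context: General position means no three points collinear. Two segments of $\mathcal{P}$ cross if they meet in a single point that is interior to both; a segment of $\mathcal{P}$ is clean in $\mathcal{P}$ if no other segment of $\mathcal{P}$ crosses it. $D(P)$ is the graph with vertex set $\mathcal{P}$, two segments adjacent iff disjoint. For a graph $G$ and $U\subseteq V(G)$, two distinct vertices $x,y\in U$ are $U$-mutually visible if $G$ contains a shortest $x$-$y$ path none of whose internal vertices lies in $U$; $U$ is a mutual-visibility set if every two distinct vertices of $U$ are $U$-mutually visible. $\mu(G)$ is the maximum size of a mutual-visibility set of $G$. *)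

theory Defs
  imports "HOL-Analysis.Analysis"
begin

type_synonym pt = "real ^ 2"

definition general_position :: "pt set \<Rightarrow> bool" where
  "general_position P \<longleftrightarrow>
     (\<forall>a\<in>P. \<forall>b\<in>P. \<forall>c\<in>P. a \<noteq> b \<and> a \<noteq> c \<and> b \<noteq> c \<longrightarrow> \<not> collinear {a, b, c})"

definition segments :: "pt set \<Rightarrow> pt set set" where
  "segments P = {closed_segment a b | a b. a \<in> P \<and> b \<in> P \<and> a \<noteq> b}"

definition crosses :: "pt set \<Rightarrow> pt set \<Rightarrow> bool" where
  "crosses s t \<longleftrightarrow> (\<exists>x. s \<inter> t = {x} \<and> x \<in> rel_interior s \<and> x \<in> rel_interior t)"

definition clean :: "pt set set \<Rightarrow> pt set \<Rightarrow> bool" where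
  "clean S s \<longleftrightarrow> (\<forall>t\<in>S. t \<noteq> s \<longrightarrow> \<not> crosses t s)"

text \<open>The disjointness graph D(P): vertices are segments, adjacent iff disjoint.\<close>
definition D_adj :: "pt set \<Rightarrow> pt set \<Rightarrow> bool" where
  "D_adj s t \<longleftrightarrow> s \<noteq> t \<and> s \<inter> t = {}"

definition gpath :: "'a set \<Rightarrow> ('a \<Rightarrow> 'a \<Rightarrow> bool) \<Rightarrow> 'a \<Rightarrow> 'a \<Rightarrow> 'a list \<Rightarrow> bool" where
  "gpath V E x y xs \<longleftrightarrow> xs \<noteq> [] \<and> hd xs = x \<and> last xs = y \<and> set xs \<subseteq> V \<and> distinct xs
     \<and> (\<forall>i. Suc i < length xs \<longrightarrow> E (xs ! i) (xs ! Suc i))"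

definition shortest_path :: "'a set \<Rightarrow> ('a \<Rightarrow> 'a \<Rightarrow> bool) \<Rightarrow> 'a \<Rightarrow> 'a \<Rightarrow> 'a list \<Rightarrow> bool" where
  "shortest_path V E x y xs \<longleftrightarrow> gpath V E x y xs \<and>
     (\<forall>ys. gpath V E x y ys \<longrightarrow> length xs \<le> length ys)"

definition mutually_visible :: "'a set \<Rightarrow> ('a \<Rightarrow> 'a \<Rightarrow> bool) \<Rightarrow> 'a set \<Rightarrow> 'a \<Rightarrow> 'a \<Rightarrow> bool" where
  "mutually_visible V E U x y \<longleftrightarrow>
     (\<exists>xs. shortest_path V E x y xs \<and> (\<forall>z\<in>set (butlast (tl xs)). z \<notin> U))"

definition mv_set :: "'a set \<Rightarrow> ('a \<Rightarrow> 'a \<Rightarrow> bool) \<Rightarrow> 'a set \<Rightarrow> bool" where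
  "mv_set V E U \<longleftrightarrow> U \<subseteq> V \<and> (\<forall>x\<in>U. \<forall>y\<in>U. x \<noteq> y \<longrightarrow> mutually_visible V E U x y)"

definition mu :: "'a set \<Rightarrow> ('a \<Rightarrow> 'a \<Rightarrow> bool) \<Rightarrow> nat" where
  "mu V E = Max {card U | U. mv_set V E U}"

end

theory Submission
  imports Defs
begin

lemma in_seg_col:
  fixes a b x :: pt
  assumes "x \<in> closed_segment a b"
  shows "collinear {a, b, x}"
proof -
  have "{a, b, x} \<subseteq> closed_segment a b" using assms by auto
  then show ?thesis using collinear_closed_segment collinear_subset by blast
qed

lemma meet_crosses:
  fixes a b c d p :: pt
  assumes gp: "general_position P" and P: "a \<in> P" "b \<in> P" "c \<in> P" "d \<in> P"
    and dist: "a \<noteq> b" "c \<noteq> d" "a \<noteq> c" "a \<noteq> d" "b \<noteq> c" "b \<noteq> d"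
    and p: "p \<in> closed_segment a b" "p \<in> closed_segment c d"
  shows "crosses (closed_segment c d) (closed_segment a b)"
proof -
  have nc: "\<not> collinear {x, y, z}" if "x \<in> {a,b,c,d}" "y \<in> {a,b,c,d}" "z \<in> {a,b,c,d}"
    "x \<noteq> y" "x \<noteq> z" "y \<noteq> z" for x y z
    using gp that P unfolding general_position_def by blast
  have pa: "p \<noteq> a" using in_seg_col[OF p(2)] nc[of c d a] dist by auto
  have pb: "p \<noteq> b" using in_seg_col[OF p(2)] nc[of c d b] dist by auto
  have pc: "p \<noteq> c" using in_seg_col[OF p(1)] nc[of a b c] dist by auto
  have pd: "p \<noteq> d" using in_seg_col[OF p(1)] nc[of a b d] dist by auto
  have uniq: "q = p" if q: "q \<in> closed_segment a b" "q \<in> closed_segment c d" for q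
  proof (rule ccontr)
    assume qp: "q \<noteq> p"
    have "{p, q, a, b} \<subseteq> closed_segment a b" using p q by auto
    then have c1: "collinear {p, q, a, b}" using collinear_closed_segment collinear_subset by blast
    have "{p, q, c, d} \<subseteq> closed_segment c d" using p q by auto
    then have c2: "collinear {p, q, c, d}" using collinear_closed_segment collinear_subset by blast
    have "collinear {p, q, a, b, c}"
      using c1 c2 qp collinear_triples[of p q "{a,b}"] collinear_triples[of p q "{c,d}"]
        collinear_triples[of p q "{a,b,c}"] by auto
    then have "collinear {a, b, c}" by (rule collinear_subset) auto
    then show False using nc[of a b c] dist by auto
  qed
  have "closed_segment c d \<inter> closed_segment a b = {p}" using uniq p by blast
  moreover have "p \<in> rel_interior (closed_segment a b)"
    unfolding rel_interior_closed_segment using dist(1) p(1) pa pb by (simp add: open_segment_def)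
  moreover have "p \<in> rel_interior (closed_segment c d)"
    unfolding rel_interior_closed_segment using dist(2) p(2) pc pd by (simp add: open_segment_def)
  ultimately show ?thesis unfolding crosses_def by blast
qed

lemma clean_meet:
  assumes gp: "general_position P" and c: "c \<in> P" and d: "d \<in> P" and cd: "c \<noteq> d"
    and s: "s \<in> segments P" and cl: "clean (segments P) s"
    and m: "s \<inter> closed_segment c d \<noteq> {}"
  shows "c \<in> s \<or> d \<in> s"
proof -
  obtain a b where ab: "s = closed_segment a b" "a \<in> P" "b \<in> P" "a \<noteq> b"
    using s unfolding segments_def by blast
  show ?thesis
  proof (rule ccontr)
    assume n: "\<not> (c \<in> s \<or> d \<in> s)"
    then have dist: "a \<noteq> c" "a \<noteq> d" "b \<noteq> c" "b \<noteq> d" using ab by auto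
    obtain p where p: "p \<in> closed_segment a b" "p \<in> closed_segment c d" using m ab by blast
    have cr: "crosses (closed_segment c d) (closed_segment a b)"
      using meet_crosses[OF gp ab(2,3) c d ab(4) cd dist p] .
    have "closed_segment c d \<in> segments P" using c d cd unfolding segments_def by blast
    moreover have "closed_segment c d \<noteq> s" using ab dist by (auto simp: doubleton_eq_iff)
    ultimately show False using cl cr ab unfolding clean_def by blast
  qed
qed

lemma sp2:
  assumes "x \<noteq> y" "E x y" "x \<in> V" "y \<in> V"
  shows "shortest_path V E x y [x, y]"
proof -
  have "gpath V E x y [x, y]" using assms unfolding gpath_def
    by (auto simp: less_Suc_eq nth_Cons')
  moreover have "length [x, y] \<le> length ys" if "gpath V E x y ys" for ys
  proof (cases ys)
    case Nil then show ?thesis using that by (simp add: gpath_def)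
  next
    case (Cons u zs) then show ?thesis using that assms(1) by (cases zs) (auto simp: gpath_def)
  qed
  ultimately show ?thesis unfolding shortest_path_def by simp
qed

lemma sp3:
  assumes "x \<noteq> y" "\<not> E x y" "E x s" "E s y" "x \<noteq> s" "s \<noteq> y" "x \<in> V" "y \<in> V" "s \<in> V"
  shows "shortest_path V E x y [x, s, y]"
proof -
  have "gpath V E x y [x, s, y]" using assms unfolding gpath_def
    by (auto simp: less_Suc_eq nth_Cons')
  moreover have "length [x, s, y] \<le> length ys" if g: "gpath V E x y ys" for ys
  proof (cases ys)
    case Nil then show ?thesis using that by (simp add: gpath_def)
  next
    case (Cons u zs)
    show ?thesis
    proof (cases zs)
      case Nil then show ?thesis using g Cons assms(1) by (auto simp: gpath_def)
    next
      case (Cons v ws)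
      show ?thesis
      proof (cases ws)
        case Nil
        have "E (ys ! 0) (ys ! Suc 0)" using g unfolding gpath_def using \<open>ys = u # zs\<close> Cons Nil by auto
        then show ?thesis using g \<open>ys = u # zs\<close> Cons Nil assms(2) by (auto simp: gpath_def)
      next
        case (Cons w vs) then show ?thesis using \<open>ys = u # zs\<close> \<open>zs = v # ws\<close> by simp
      qed
    qed
  qed
  ultimately show ?thesis unfolding shortest_path_def by simp
qed


lemma card_at_most_one:
  assumes "finite A" "\<And>s t. s \<in> A \<Longrightarrow> t \<in> A \<Longrightarrow> s = t"
  shows "card A \<le> 1"
  using assms card_le_Suc0_iff_eq[of A] by simp

lemma segs_finite: "finite P \<Longrightarrow> finite (segments P)"
proof -
  assume f: "finite P"
  have "segments P \<subseteq> (\<lambda>(a, b). closed_segment a b) ` (P \<times> P)"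
    unfolding segments_def by auto
  moreover have "finite ((\<lambda>(a, b). closed_segment a b) ` (P \<times> P))" using f by simp
  ultimately show ?thesis by (rule finite_subset)
qed

lemma segs_card:
  assumes "finite P"
  shows "card P choose 2 \<le> card (segments P)"
proof -
  have sub: "(\<lambda>B. convex hull B) ` {B. B \<subseteq> P \<and> card B = 2} \<subseteq> segments P"
  proof
    fix z assume "z \<in> (\<lambda>B. convex hull B) ` {B. B \<subseteq> P \<and> card B = 2}"
    then obtain B where B: "B \<subseteq> P" "card B = 2" "z = convex hull B" by blast
    then obtain a b where "B = {a, b}" "a \<noteq> b" by (meson card_2_iff)
    then show "z \<in> segments P" using B unfolding segments_def
      by (auto simp: segment_convex_hull)
  qed
  have inj: "inj_on (\<lambda>B. convex hull B) {B. B \<subseteq> P \<and> card B = 2}"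
  proof (rule inj_onI)
    fix B C assume B: "B \<in> {B. B \<subseteq> P \<and> card B = 2}" and C: "C \<in> {B. B \<subseteq> P \<and> card B = 2}"
      and e: "convex hull B = convex hull C"
    obtain a b where ab: "B = {a, b}" using B by (auto simp: card_2_iff)
    obtain c d where cd: "C = {c, d}" using C by (auto simp: card_2_iff)
    have "closed_segment a b = closed_segment c d" using e ab cd by (simp add: segment_convex_hull)
    then show "B = C" using ab cd closed_segment_eq by blast
  qed
  have "card P choose 2 = card {B. B \<subseteq> P \<and> card B = 2}" using n_subsets[OF assms] by simp
  also have "\<dots> = card ((\<lambda>B. convex hull B) ` {B. B \<subseteq> P \<and> card B = 2})"
    using card_image[OF inj] by simp
  also have "\<dots> \<le> card (segments P)" using card_mono[OF segs_finite[OF assms] sub] .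
  finally show ?thesis .
qed

theorem proposition11:
  fixes P :: "pt set"
  assumes "finite P" and "card P \<ge> 5" and "general_position P"
    and "\<exists>S \<subseteq> segments P. card S = 5 \<and>
           (\<forall>s\<in>S. \<forall>t\<in>S. s \<noteq> t \<longrightarrow> s \<inter> t = {}) \<and>
           (\<forall>s\<in>S. clean (segments P) s)"
  shows "mu (segments P) D_adj \<ge> (card P choose 2) - 5"
proof -
  from assms(4) obtain S where S: "S \<subseteq> segments P" "card S = 5"
    and dj0: "\<forall>s\<in>S. \<forall>t\<in>S. s \<noteq> t \<longrightarrow> s \<inter> t = {}"
    and cl0: "\<forall>s\<in>S. clean (segments P) s"
    by auto
  have dj: "s \<inter> t = {}" if "s \<in> S" "t \<in> S" "s \<noteq> t" for s t using dj0 that by blast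
  have cl: "clean (segments P) s" if "s \<in> S" for s using cl0 that by blast
  have fS: "finite S" by (rule card_ge_0_finite) (simp add: S(2))
  define U where "U = segments P - S"
  have one: "card {s \<in> S. c \<in> s} \<le> 1" for c
  proof (rule card_at_most_one)
    show "finite {s \<in> S. c \<in> s}" using fS by simp
  next
    fix s t assume "s \<in> {s \<in> S. c \<in> s}" "t \<in> {s \<in> S. c \<in> s}"
    then show "s = t" using dj[of s t] by blast
  qed
  have avoid: "\<exists>s\<in>S. s \<inter> x = {} \<and> s \<inter> y = {}" if x: "x \<in> segments P" and y: "y \<in> segments P" for x y
  proof -
    obtain c d where cd: "x = closed_segment c d" "c \<in> P" "d \<in> P" "c \<noteq> d"
      using x unfolding segments_def by blast
    obtain c' d' where cd': "y = closed_segment c' d'" "c' \<in> P" "d' \<in> P" "c' \<noteq> d'"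
      using y unfolding segments_def by blast
    define bad where "bad = {s \<in> S. c \<in> s} \<union> {s \<in> S. d \<in> s} \<union> {s \<in> S. c' \<in> s} \<union> {s \<in> S. d' \<in> s}"
    have u1: "card bad \<le> card ({s \<in> S. c \<in> s} \<union> {s \<in> S. d \<in> s} \<union> {s \<in> S. c' \<in> s}) + card {s \<in> S. d' \<in> s}"
      unfolding bad_def by (rule card_Un_le)
    have u2: "card ({s \<in> S. c \<in> s} \<union> {s \<in> S. d \<in> s} \<union> {s \<in> S. c' \<in> s}) \<le> card ({s \<in> S. c \<in> s} \<union> {s \<in> S. d \<in> s}) + card {s \<in> S. c' \<in> s}"
      by (rule card_Un_le)
    have u3: "card ({s \<in> S. c \<in> s} \<union> {s \<in> S. d \<in> s}) \<le> card {s \<in> S. c \<in> s} + card {s \<in> S. d \<in> s}"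
      by (rule card_Un_le)
    have "card bad \<le> 4" using u1 u2 u3 one[of c] one[of d] one[of c'] one[of d'] by linarith
    then have lt: "card bad < card S" using S(2) by simp
    have bS: "bad \<subseteq> S" unfolding bad_def by blast
    have "\<not> S \<subseteq> bad"
    proof
      assume "S \<subseteq> bad"
      then have "card S \<le> card bad" using card_mono[of bad S] fS finite_subset[OF bS fS] by blast
      then show False using lt by simp
    qed
    then obtain s where s: "s \<in> S" "s \<notin> bad" by blast
    have ncd: "c \<notin> s" "d \<notin> s" "c' \<notin> s" "d' \<notin> s" using s unfolding bad_def by blast+
    have sP: "s \<in> segments P" using s(1) S(1) by blast
    have "s \<inter> x = {}"
    proof (rule ccontr)
      assume "s \<inter> x \<noteq> {}"
      then have "c \<in> s \<or> d \<in> s" using clean_meet[OF assms(3) cd(2,3,4) sP cl[OF s(1)]] cd(1) by blast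
      then show False using ncd by blast
    qed
    moreover have "s \<inter> y = {}"
    proof (rule ccontr)
      assume "s \<inter> y \<noteq> {}"
      then have "c' \<in> s \<or> d' \<in> s" using clean_meet[OF assms(3) cd'(2,3,4) sP cl[OF s(1)]] cd'(1) by blast
      then show False using ncd by blast
    qed
    ultimately show ?thesis using s by blast
  qed
  have mv: "mv_set (segments P) D_adj U"
    unfolding mv_set_def
  proof (intro conjI ballI impI)
    show "U \<subseteq> segments P" unfolding U_def by blast
  next
    fix x y assume x: "x \<in> U" and y: "y \<in> U" and xy: "x \<noteq> y"
    show "mutually_visible (segments P) D_adj U x y"
    proof (cases "x \<inter> y = {}")
      case True
      have "shortest_path (segments P) D_adj x y [x, y]"
        by (rule sp2) (use True x y xy in \<open>auto simp: D_adj_def U_def\<close>)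
      then show ?thesis unfolding mutually_visible_def by force
    next
      case False
      obtain s where s: "s \<in> S" "s \<inter> x = {}" "s \<inter> y = {}"
        using avoid x y unfolding U_def by blast
      have "shortest_path (segments P) D_adj x y [x, s, y]"
        by (rule sp3) (use False x y xy s S(1) in \<open>auto simp: D_adj_def U_def\<close>)
      then show ?thesis unfolding mutually_visible_def using s(1) unfolding U_def by force
    qed
  qed
  have fin: "finite {card U | U. mv_set (segments P) D_adj U}"
  proof -
    have "{card U | U. mv_set (segments P) D_adj U} \<subseteq> card ` Pow (segments P)"
      unfolding mv_set_def by auto
    moreover have "finite (card ` Pow (segments P))" using segs_finite[OF assms(1)] by simp
    ultimately show ?thesis by (rule finite_subset)
  qed
  have "card U \<le> mu (segments P) D_adj"
    unfolding mu_def using mv fin by (auto intro: Max_ge)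
  moreover have "card U = card (segments P) - 5"
    unfolding U_def using card_Diff_subset[OF fS S(1)] S(2) by simp
  ultimately show ?thesis using segs_card[OF assms(1)] by linarith
qed

end
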